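(* There exists a universal constant $C<\infty$ such that the following holds. Let $(a_{ijk})_{i,j\le n,k\le m}$ be real numbers, $T\subset\mathbb{R}^m$ a nonempty bounded set and $V$ a nonempty subset of $B_2^n\times (T-T)$. Then for every $(y,s)\in \mathbb{R}^n\times \mathbb{R}^m$, \[ F_A(V+(y,s))\leq F_A(V)+2\beta_{A,T}(y)+C\,\mathbb{E}\alpha_A(G_n\otimes s). \]
   Context: $G_n=(g_1,\dots,g_n)$ is a standard Gaussian vector in $\mathbb{R}^n$; $B_2^n$ the Euclidean unit ball; $T-T=\{t-t':t,t'\in T\}$. For $x\in\mathbb{R}^n,t\in\mathbb{R}^m$, $x\otimes t=(x_jt_k)_{j,k}$; for $y\in\mathbb{R}^{nm}$, $\alpha_A(y)=\big(\sum_{i}(\sum_{j,k}a_{ijk}y_{jk})^2\big)^{1/2}$. $\beta_{A,T}(x)=\mathbb{E}\sup_{t\in T}|\sum_{i,j,k}a_{ijk}g_ix_jt_k|$, and for $W\subset\mathbb{R}^n\times\mathbb{R}^m$, $F_A(W)=\mathbb{E}\sup_{(x,t)\in W}\sum_{i,j,k}a_{ijk}g_ix_jt_k$. *)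

theory Defs
  imports "HOL-Probability.Probability"
begin

(* Vectors of R^n are represented as functions nat => real supported on {..<n}
   (coordinates 0..n-1 instead of 1..n). *)
definition vecs :: "nat \<Rightarrow> (nat \<Rightarrow> real) set" where
  "vecs n = {x. \<forall>j\<ge>n. x j = 0}"

definition ball2 :: "nat \<Rightarrow> (nat \<Rightarrow> real) set" where
  "ball2 n = {x \<in> vecs n. (\<Sum>j<n. (x j)\<^sup>2) \<le> 1}"

definition bounded_in :: "nat \<Rightarrow> (nat \<Rightarrow> real) set \<Rightarrow> bool" where
  "bounded_in m T \<longleftrightarrow> (\<exists>R. \<forall>t\<in>T. \<forall>k<m. \<bar>t k\<bar> \<le> R)"

definition diffset :: "(nat \<Rightarrow> real) set \<Rightarrow> (nat \<Rightarrow> real) set" where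
  "diffset T = {(\<lambda>k. t k - t' k) | t t'. t \<in> T \<and> t' \<in> T}"

definition translate ::
  "((nat \<Rightarrow> real) \<times> (nat \<Rightarrow> real)) set \<Rightarrow> (nat \<Rightarrow> real) \<Rightarrow> (nat \<Rightarrow> real)
     \<Rightarrow> ((nat \<Rightarrow> real) \<times> (nat \<Rightarrow> real)) set" where
  "translate V y s = (\<lambda>(x, t). (\<lambda>j. x j + y j, \<lambda>k. t k + s k)) ` V"

definition gauss :: "nat \<Rightarrow> (nat \<Rightarrow> real) measure" where
  "gauss n = PiM {..<n} (\<lambda>_. density lborel std_normal_density)"

definition tensor :: "(nat \<Rightarrow> real) \<Rightarrow> (nat \<Rightarrow> real) \<Rightarrow> nat \<Rightarrow> nat \<Rightarrow> real" where
  "tensor x t = (\<lambda>j k. x j * t k)"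

definition alphaA :: "(nat \<Rightarrow> nat \<Rightarrow> nat \<Rightarrow> real) \<Rightarrow> nat \<Rightarrow> nat
     \<Rightarrow> (nat \<Rightarrow> nat \<Rightarrow> real) \<Rightarrow> real" where
  "alphaA a n m y = sqrt (\<Sum>i<n. (\<Sum>j<n. \<Sum>k<m. a i j k * y j k)\<^sup>2)"

definition form3 :: "(nat \<Rightarrow> nat \<Rightarrow> nat \<Rightarrow> real) \<Rightarrow> nat \<Rightarrow> nat
     \<Rightarrow> (nat \<Rightarrow> real) \<Rightarrow> (nat \<Rightarrow> real) \<Rightarrow> (nat \<Rightarrow> real) \<Rightarrow> real" where
  "form3 a n m g x t = (\<Sum>i<n. \<Sum>j<n. \<Sum>k<m. a i j k * g i * x j * t k)"

definition betaA :: "(nat \<Rightarrow> nat \<Rightarrow> nat \<Rightarrow> real) \<Rightarrow> nat \<Rightarrow> nat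
     \<Rightarrow> (nat \<Rightarrow> real) set \<Rightarrow> (nat \<Rightarrow> real) \<Rightarrow> real" where
  "betaA a n m T x = (\<integral>g. (SUP t\<in>T. \<bar>form3 a n m g x t\<bar>) \<partial>gauss n)"

definition FA :: "(nat \<Rightarrow> nat \<Rightarrow> nat \<Rightarrow> real) \<Rightarrow> nat \<Rightarrow> nat
     \<Rightarrow> ((nat \<Rightarrow> real) \<times> (nat \<Rightarrow> real)) set \<Rightarrow> real" where
  "FA a n m W = (\<integral>g. (SUP w\<in>W. form3 a n m g (fst w) (snd w)) \<partial>gauss n)"

end

theory Submission
  imports Defs
begin


abbreviation "NN \<equiv> std_normal_distribution"

lemma prob_NN: "prob_space NN"
  using real_dist_normal_dist real_distribution_def by blast

lemma prob_gauss: "prob_space (gauss n)"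
  unfolding gauss_def using prob_NN by (intro prob_space_PiM) auto

lemma space_gauss: "space (gauss n) = PiE {..<n} (\<lambda>_. UNIV)"
  unfolding gauss_def by (simp add: space_PiM)

lemma comp_meas: "(\<lambda>g. g i) \<in> borel_measurable (gauss n)"
proof (cases "i < n")
  case True
  then show ?thesis
  proof -
    have "(\<lambda>g. g i) \<in> measurable (PiM {..<n} (\<lambda>_. NN)) NN"
      using True by (intro measurable_component_singleton) auto
    moreover have "measurable (PiM {..<n} (\<lambda>_. NN)) NN = measurable (gauss n) borel"
      by (rule measurable_cong_sets) (auto simp: gauss_def)
    ultimately show ?thesis by simp
  qed
next
  case False
  have "(\<lambda>g. undefined) \<in> borel_measurable (gauss n)" by simp
  then show ?thesis
    by (rule measurable_cong[THEN iffD1, rotated]) (use False in \<open>auto simp: space_gauss PiE_def extensional_def\<close>)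
qed

lemma comp_distributed:
  assumes "i < n"
  shows "distributed (gauss n) lborel (\<lambda>g. g i) std_normal_density"
proof -
  have "distr (gauss n) lborel (\<lambda>g. g i) = distr (gauss n) NN (\<lambda>g. g i)"
    by (rule distr_cong) auto
  also have "\<dots> = NN" unfolding gauss_def
    using distr_PiM_component[of "{..<n}" "\<lambda>_. NN" i] prob_NN assms by auto
  finally show ?thesis unfolding distributed_def using comp_meas by auto
qed

lemma indep_comp: "prob_space.indep_vars (gauss n) (\<lambda>_. borel) (\<lambda>i g. g i) {..<n}"
proof (cases "n = 0")
  case True
  then show ?thesis using prob_gauss comp_meas
    by (auto simp: prob_space.indep_vars_def prob_space.indep_sets_def)
next
  case False
  interpret P: prob_space "gauss n" by (rule prob_gauss)
  have "distr (gauss n) (PiM {..<n} (\<lambda>_. borel)) (\<lambda>x. \<lambda>i\<in>{..<n}. x i) =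
        distr (gauss n) (PiM {..<n} (\<lambda>_. borel)) (\<lambda>x. x)"
    by (rule distr_cong) (auto simp: space_gauss)
  also have "\<dots> = gauss n"
    by (rule distr_id2) (auto simp: gauss_def intro!: sets_PiM_cong)
  also have "\<dots> = PiM {..<n} (\<lambda>i. distr (gauss n) borel (\<lambda>x. x i))"
  proof -
    have "distr (gauss n) borel (\<lambda>x. x i) = NN" if "i < n" for i
    proof -
      have "distr (gauss n) borel (\<lambda>g. g i) = distr (gauss n) NN (\<lambda>g. g i)"
        by (rule distr_cong) auto
      also have "\<dots> = NN" unfolding gauss_def
        using distr_PiM_component[of "{..<n}" "\<lambda>_. NN" i] prob_NN that by auto
      finally show ?thesis .
    qed
    then show ?thesis unfolding gauss_def by (intro PiM_cong) auto
  qed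
  finally show ?thesis
    using P.indep_vars_iff_distr_eq_PiM[where I="{..<n}" and M'="\<lambda>_. borel" and X="\<lambda>i g. g i"] False comp_meas
    by auto
qed



definition lin :: "nat \<Rightarrow> (nat \<Rightarrow> real) \<Rightarrow> (nat \<Rightarrow> real) \<Rightarrow> real" where
  "lin n c g = (\<Sum>i<n. c i * g i)"

lemma lin_meas[measurable]: "lin n c \<in> borel_measurable (gauss n)"
  unfolding lin_def using comp_meas by measurable

lemma lin_normal:
  fixes c :: "nat \<Rightarrow> real" and n :: nat
  defines "I \<equiv> {i. i < n \<and> c i \<noteq> 0}"
  assumes "I \<noteq> {}"
  shows "distributed (gauss n) lborel (lin n c) (normal_density 0 (sqrt (\<Sum>i\<in>I. (c i)\<^sup>2)))"
proof -
  interpret P: prob_space "gauss n" by (rule prob_gauss)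
  have fin: "finite I" unfolding I_def by auto
  have eq: "lin n c = (\<lambda>g. \<Sum>i\<in>I. c i * g i)"
    unfolding lin_def I_def by (intro ext sum.mono_neutral_right) auto
  have ind: "P.indep_vars (\<lambda>_. borel) (\<lambda>i g. c i * g i) I"
    using P.indep_vars_compose2[OF P.indep_vars_subset[OF indep_comp[of n]], of I "\<lambda>i x. c i * x" "\<lambda>_. borel"]
    unfolding I_def by auto
  have dist: "distributed (gauss n) lborel (\<lambda>g. c i * g i) (normal_density 0 \<bar>c i\<bar>)" if "i \<in> I" for i
    using P.normal_density_affine[OF comp_distributed[of i n], of "c i" 0] that unfolding I_def by auto
  have "distributed (gauss n) lborel (\<lambda>g. \<Sum>i\<in>I. c i * g i) (normal_density (\<Sum>i\<in>I. 0) (sqrt (\<Sum>i\<in>I. \<bar>c i\<bar>\<^sup>2)))"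
    by (rule P.sum_indep_normal[OF fin assms(2) ind]) (use dist in \<open>auto simp: I_def\<close>)
  then show ?thesis unfolding eq by simp
qed

lemma lin_facts:
  fixes c :: "nat \<Rightarrow> real"
  shows "integrable (gauss n) (lin n c)" "integral\<^sup>L (gauss n) (lin n c) = 0"
    "integrable (gauss n) (\<lambda>g. \<bar>lin n c g\<bar>)"
    "integral\<^sup>L (gauss n) (\<lambda>g. \<bar>lin n c g\<bar>) = sqrt (2/pi) * sqrt (\<Sum>i<n. (c i)\<^sup>2)"
    "integrable (gauss n) (\<lambda>g. (lin n c g)\<^sup>2)"
    "integral\<^sup>L (gauss n) (\<lambda>g. (lin n c g)\<^sup>2) = (\<Sum>i<n. (c i)\<^sup>2)"
proof -
  interpret P: prob_space "gauss n" by (rule prob_gauss)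
  define I where "I = {i. i < n \<and> c i \<noteq> 0}"
  have sI: "(\<Sum>i<n. (c i)\<^sup>2) = (\<Sum>i\<in>I. (c i)\<^sup>2)"
    unfolding I_def by (intro sum.mono_neutral_right) auto
  have all: "integrable (gauss n) (lin n c) \<and> integral\<^sup>L (gauss n) (lin n c) = 0 \<and>
    integrable (gauss n) (\<lambda>g. \<bar>lin n c g\<bar>) \<and>
    integral\<^sup>L (gauss n) (\<lambda>g. \<bar>lin n c g\<bar>) = sqrt (2/pi) * sqrt (\<Sum>i<n. (c i)\<^sup>2) \<and>
    integrable (gauss n) (\<lambda>g. (lin n c g)\<^sup>2) \<and>
    integral\<^sup>L (gauss n) (\<lambda>g. (lin n c g)\<^sup>2) = (\<Sum>i<n. (c i)\<^sup>2)"
  proof (cases "I = {}")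
    case True
    then have "lin n c = (\<lambda>_. 0)" "(\<Sum>i<n. (c i)\<^sup>2) = 0"
      unfolding lin_def I_def by (auto intro!: ext sum.neutral)
    then show ?thesis by simp
  next
    case False
    define \<sigma> where "\<sigma> = sqrt (\<Sum>i\<in>I. (c i)\<^sup>2)"
    have D: "distributed (gauss n) lborel (lin n c) (normal_density 0 \<sigma>)"
      using lin_normal[of n c] False unfolding I_def \<sigma>_def by auto
    obtain i0 where i0: "i0 \<in> I" using False by blast
    have spos: "\<sigma> > 0" unfolding \<sigma>_def using i0
      by (intro real_sqrt_gt_zero sum_pos2[where i=i0]) (auto simp: I_def)
    have nn: "\<And>x. 0 \<le> normal_density 0 \<sigma> x" by (rule normal_density_nonneg)
    have h1: "has_bochner_integral lborel (\<lambda>x. normal_density 0 \<sigma> x * x) 0"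
      using normal_moment_odd[OF spos, where k=0 and \<mu>=0] by simp
    have h2: "has_bochner_integral lborel (\<lambda>x. normal_density 0 \<sigma> x * \<bar>x\<bar>) (\<sigma> * sqrt (2/pi))"
      using normal_moment_abs_odd[OF spos, where k=0 and \<mu>=0] by simp
    have h3: "has_bochner_integral lborel (\<lambda>x. normal_density 0 \<sigma> x * x\<^sup>2) (\<sigma>\<^sup>2)"
      using normal_moment_even[OF spos, where k=1 and \<mu>=0] by (simp add: field_simps power2_eq_square)
    have i1: "integrable (gauss n) (lin n c)"
      using distributed_integrable[OF D, of "\<lambda>x. x"] integrable.intros[OF h1] nn by auto
    have i2: "integrable (gauss n) (\<lambda>g. \<bar>lin n c g\<bar>)"
      using distributed_integrable[OF D, of "\<lambda>x. \<bar>x\<bar>"] integrable.intros[OF h2] nn by auto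
    have i3: "integrable (gauss n) (\<lambda>g. (lin n c g)\<^sup>2)"
      using distributed_integrable[OF D, of "\<lambda>x. x\<^sup>2"] integrable.intros[OF h3] nn by auto
    have e1: "integral\<^sup>L (gauss n) (lin n c) = 0"
      using distributed_integral[OF D, of "\<lambda>x. x"] has_bochner_integral_integral_eq[OF h1] nn by auto
    have e2: "integral\<^sup>L (gauss n) (\<lambda>g. \<bar>lin n c g\<bar>) = \<sigma> * sqrt (2/pi)"
      using distributed_integral[OF D, of "\<lambda>x. \<bar>x\<bar>"] has_bochner_integral_integral_eq[OF h2] nn by auto
    have e3: "integral\<^sup>L (gauss n) (\<lambda>g. (lin n c g)\<^sup>2) = \<sigma>\<^sup>2"
      using distributed_integral[OF D, of "\<lambda>x. x\<^sup>2"] has_bochner_integral_integral_eq[OF h3] nn by auto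
    have "\<sigma>\<^sup>2 = (\<Sum>i<n. (c i)\<^sup>2)" unfolding \<sigma>_def sI by (simp add: sum_nonneg)
    then show ?thesis using i1 i2 i3 e1 e2 e3 unfolding \<sigma>_def sI by (simp add: mult.commute)
  qed
  then show "integrable (gauss n) (lin n c)" "integral\<^sup>L (gauss n) (lin n c) = 0"
    "integrable (gauss n) (\<lambda>g. \<bar>lin n c g\<bar>)"
    "integral\<^sup>L (gauss n) (\<lambda>g. \<bar>lin n c g\<bar>) = sqrt (2/pi) * sqrt (\<Sum>i<n. (c i)\<^sup>2)"
    "integrable (gauss n) (\<lambda>g. (lin n c g)\<^sup>2)"
    "integral\<^sup>L (gauss n) (\<lambda>g. (lin n c g)\<^sup>2) = (\<Sum>i<n. (c i)\<^sup>2)" by auto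
qed



lemma lin_cont: "continuous_on UNIV (lin n c)"
  unfolding lin_def by (intro continuous_intros continuous_on_product_coordinates)

lemma id_meas: "(\<lambda>g. g) \<in> borel_measurable (gauss n)"
  by (rule measurable_coordinatewise_then_product) (rule comp_meas)

lemma sup_meas:
  fixes \<phi> :: "'w \<Rightarrow> (nat \<Rightarrow> real) \<Rightarrow> real"
  assumes W: "W \<noteq> {}" and cont: "\<And>w. w \<in> W \<Longrightarrow> continuous_on UNIV (\<phi> w)"
    and bdd: "\<And>g. bdd_above ((\<lambda>w. \<phi> w g) ` W)"
  shows "(\<lambda>g. SUP w\<in>W. \<phi> w g) \<in> borel_measurable (gauss n)"
proof (rule borel_measurableI_greater)
  fix a :: real
  define U where "U = (\<Union>w\<in>W. {g. a < \<phi> w g})"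
  have "open U" unfolding U_def
    by (intro open_UN ballI open_Collect_less continuous_on_const cont)
  then have "U \<in> sets borel" by simp
  then have "(\<lambda>g. g) -` U \<inter> space (gauss n) \<in> sets (gauss n)"
    by (rule measurable_sets[OF id_meas])
  moreover have "{g \<in> space (gauss n). a < (SUP w\<in>W. \<phi> w g)} = (\<lambda>g. g) -` U \<inter> space (gauss n)"
    unfolding U_def using less_cSUP_iff[OF W bdd] by auto
  ultimately show "{g \<in> space (gauss n). a < (SUP w\<in>W. \<phi> w g)} \<in> sets (gauss n)" by simp
qed



definition coef :: "(nat \<Rightarrow> nat \<Rightarrow> nat \<Rightarrow> real) \<Rightarrow> nat \<Rightarrow> nat \<Rightarrow> (nat \<Rightarrow> real) \<Rightarrow> (nat \<Rightarrow> real) \<Rightarrow> nat \<Rightarrow> real" where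
  "coef a n m x t i = (\<Sum>j<n. \<Sum>k<m. a i j k * x j * t k)"

lemma form3_lin: "form3 a n m g x t = lin n (coef a n m x t) g"
  unfolding form3_def lin_def coef_def
  by (simp add: sum_distrib_left mult_ac)

lemma form3_cont: "continuous_on UNIV (\<lambda>g. form3 a n m g x t)"
  unfolding form3_lin using lin_cont by (simp add: fun_eq_iff[symmetric])

lemma form3_abs_cont: "continuous_on UNIV (\<lambda>g. \<bar>form3 a n m g x t\<bar>)"
  by (intro continuous_on_rabs form3_cont)

definition S1 :: "nat \<Rightarrow> (nat \<Rightarrow> real) \<Rightarrow> real" where
  "S1 n g = (\<Sum>i<n. \<bar>g i\<bar>)"

lemma S1_int: "integrable (gauss n) (S1 n)"
proof -
  have "integrable (gauss n) (\<lambda>g. \<bar>g i\<bar>)" if "i < n" for i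
  proof -
    have "lin n (\<lambda>l. if l = i then 1 else 0) g = g i" for g
    proof -
      have "\<And>l. (if l = i then 1 else 0) * g l = (if l = i then g l else (0::real))" by simp
      then show ?thesis unfolding lin_def using that by (simp add: sum.delta)
    qed
    then show ?thesis using lin_facts(3)[of n "\<lambda>l. if l = i then 1 else 0"] by simp
  qed
  then show ?thesis unfolding S1_def by (rule Bochner_Integration.integrable_sum[where f="\<lambda>i (g::nat\<Rightarrow>real). \<bar>g i\<bar>"]) auto
qed

lemma S1_nonneg: "0 \<le> S1 n g"
  unfolding S1_def by (simp add: sum_nonneg)

lemma form3_bound:
  assumes "0 \<le> X" "0 \<le> Tb" "\<And>j. j < n \<Longrightarrow> \<bar>x j\<bar> \<le> X" "\<And>k. k < m \<Longrightarrow> \<bar>t k\<bar> \<le> Tb"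
  shows "\<bar>form3 a n m g x t\<bar> \<le> ((\<Sum>i<n. \<Sum>j<n. \<Sum>k<m. \<bar>a i j k\<bar>) * X * Tb) * S1 n g"
proof -
  define Aa where "Aa = (\<Sum>i<n. \<Sum>j<n. \<Sum>k<m. \<bar>a i j k\<bar>)"
  have ci: "\<bar>coef a n m x t i\<bar> \<le> Aa * X * Tb" if "i < n" for i
  proof -
    have "\<bar>coef a n m x t i\<bar> \<le> (\<Sum>j<n. \<Sum>k<m. \<bar>a i j k * x j * t k\<bar>)"
      unfolding coef_def by (rule order_trans[OF sum_abs sum_mono]) (rule sum_abs)
    also have "\<dots> \<le> (\<Sum>j<n. \<Sum>k<m. \<bar>a i j k\<bar> * X * Tb)"
      unfolding abs_mult
      by (intro sum_mono mult_mono assms) (auto simp: mult_nonneg_nonneg assms)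
    also have "\<dots> = (\<Sum>j<n. \<Sum>k<m. \<bar>a i j k\<bar>) * X * Tb"
      by (simp add: sum_distrib_right)
    also have "\<dots> \<le> Aa * X * Tb"
      unfolding Aa_def using that
      by (intro mult_right_mono member_le_sum[where i=i and f="\<lambda>i. \<Sum>j<n. \<Sum>k<m. \<bar>a i j k\<bar>"])
         (auto intro!: sum_nonneg assms)
    finally show ?thesis .
  qed
  have "\<bar>form3 a n m g x t\<bar> \<le> (\<Sum>i<n. \<bar>coef a n m x t i\<bar> * \<bar>g i\<bar>)"
    unfolding form3_lin lin_def by (rule order_trans[OF sum_abs]) (simp add: abs_mult)
  also have "\<dots> \<le> (\<Sum>i<n. Aa * X * Tb * \<bar>g i\<bar>)"
    by (intro sum_mono mult_right_mono ci) auto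
  also have "\<dots> = Aa * X * Tb * S1 n g" unfolding S1_def by (simp add: sum_distrib_left)
  finally show ?thesis unfolding Aa_def .
qed

lemma sup_int:
  fixes \<phi> :: "'w \<Rightarrow> (nat \<Rightarrow> real) \<Rightarrow> real" and K :: real
  assumes W: "W \<noteq> {}" and cont: "\<And>w. w \<in> W \<Longrightarrow> continuous_on UNIV (\<phi> w)"
    and bnd: "\<And>w g. w \<in> W \<Longrightarrow> \<bar>\<phi> w g\<bar> \<le> K * S1 n g"
  shows "integrable (gauss n) (\<lambda>g. SUP w\<in>W. \<phi> w g)"
    and "\<And>g. bdd_above ((\<lambda>w. \<phi> w g) ` W)"
proof -
  show bdd: "bdd_above ((\<lambda>w. \<phi> w g) ` W)" for g
    using bnd by (intro bdd_aboveI2[of _ _ "K * S1 n g"]) (force simp: abs_le_iff)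
  have "\<bar>SUP w\<in>W. \<phi> w g\<bar> \<le> K * S1 n g" for g
  proof -
    obtain w0 where w0: "w0 \<in> W" using W by blast
    have "(SUP w\<in>W. \<phi> w g) \<le> K * S1 n g"
      using bnd by (intro cSUP_least W) (force simp: abs_le_iff)
    moreover have "\<phi> w0 g \<le> (SUP w\<in>W. \<phi> w g)" by (rule cSUP_upper[OF w0 bdd])
    moreover have "- (K * S1 n g) \<le> \<phi> w0 g" using bnd[OF w0, of g] by simp
    ultimately show ?thesis by simp
  qed
  note bd = this
  have int: "integrable (gauss n) (\<lambda>g. K * S1 n g)" using S1_int by simp
  show "integrable (gauss n) (\<lambda>g. SUP w\<in>W. \<phi> w g)"
  proof (rule Bochner_Integration.integrable_bound[OF int sup_meas[OF W cont bdd]])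
    show "AE x in gauss n. norm (SUP w\<in>W. \<phi> w x) \<le> norm (K * S1 n x)"
      by (rule AE_I2) (simp only: real_norm_def, rule order_trans[OF bd abs_ge_self])
  qed
qed



definition Qf :: "nat \<Rightarrow> (nat \<Rightarrow> nat \<Rightarrow> real) \<Rightarrow> (nat \<Rightarrow> real) \<Rightarrow> real" where
  "Qf n c g = sqrt (\<Sum>j<n. (lin n (c j) g)\<^sup>2)"

lemma Qf_int: "integrable (gauss n) (Qf n c)"
proof -
  have int: "integrable (gauss n) (\<lambda>g. \<Sum>j<n. \<bar>lin n (c j) g\<bar>)"
    by (rule Bochner_Integration.integrable_sum) (rule lin_facts(3))
  have meas: "Qf n c \<in> borel_measurable (gauss n)"
    unfolding Qf_def by measurable
  show ?thesis
  proof (rule Bochner_Integration.integrable_bound[OF int meas])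
    show "AE x in gauss n. norm (Qf n c x) \<le> norm (\<Sum>j<n. \<bar>lin n (c j) x\<bar>)"
    proof (rule AE_I2)
      fix x
      have "Qf n c x \<le> (\<Sum>j<n. \<bar>lin n (c j) x\<bar>)"
        using L2_set_le_sum_abs[of "\<lambda>j. lin n (c j) x" "{..<n}"] unfolding Qf_def L2_set_def .
      moreover have "0 \<le> Qf n c x" unfolding Qf_def by (simp add: sum_nonneg)
      ultimately show "norm (Qf n c x) \<le> norm (\<Sum>j<n. \<bar>lin n (c j) x\<bar>)" by simp
    qed
  qed
qed

lemma Qf_sq: "(Qf n c g)\<^sup>2 = (\<Sum>j<n. (lin n (c j) g)\<^sup>2)"
  unfolding Qf_def by (simp add: sum_nonneg)

lemma Qf_zero:
  assumes "(\<Sum>j<n. \<Sum>i<n. (c j i)\<^sup>2) = 0"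
  shows "Qf n c g = 0"
proof -
  have "c j i = 0" if "j < n" "i < n" for i j
  proof -
    have "(\<Sum>i<n. (c j i)\<^sup>2) = 0"
      using assms sum_nonneg_eq_0_iff[of "{..<n}" "\<lambda>j. \<Sum>i<n. (c j i)\<^sup>2"] that
      by (auto simp: sum_nonneg)
    then show ?thesis using sum_nonneg_eq_0_iff[of "{..<n}" "\<lambda>i. (c j i)\<^sup>2"] that by auto
  qed
  then show ?thesis unfolding Qf_def lin_def by simp
qed

lemma Qf_upper:
  shows "integral\<^sup>L (gauss n) (Qf n c) \<le> sqrt (\<Sum>j<n. \<Sum>i<n. (c j i)\<^sup>2)"
proof -
  define L where "L = sqrt (\<Sum>j<n. \<Sum>i<n. (c j i)\<^sup>2)"
  have L0: "0 \<le> L" unfolding L_def by (simp add: sum_nonneg)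
  show ?thesis
  proof (cases "L = 0")
    case True
    then have "(\<Sum>j<n. \<Sum>i<n. (c j i)\<^sup>2) = 0" unfolding L_def by (simp add: sum_nonneg)
    then have "Qf n c = (\<lambda>_. 0)" using Qf_zero[where n=n and c=c] by (intro ext) simp
    then show ?thesis by (simp add: sum_nonneg)
  next
    case False
    then have Lp: "L > 0" using L0 by simp
    have pt: "Qf n c g \<le> ((\<Sum>j<n. (lin n (c j) g)\<^sup>2) / L + L) / 2" for g
    proof -
      have "0 \<le> (Qf n c g - L)\<^sup>2" by simp
      then have "2 * L * Qf n c g \<le> (Qf n c g)\<^sup>2 + L\<^sup>2" by (simp add: power2_eq_square algebra_simps)
      then show ?thesis unfolding Qf_sq[symmetric] using Lp
        by (simp add: field_simps power2_eq_square)
    qed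
    have int2: "integrable (gauss n) (\<lambda>g. ((\<Sum>j<n. (lin n (c j) g)\<^sup>2) / L + L) / 2)"
    proof -
      interpret P: prob_space "gauss n" by (rule prob_gauss)
      have "integrable (gauss n) (\<lambda>g. \<Sum>j<n. (lin n (c j) g)\<^sup>2)"
        by (rule Bochner_Integration.integrable_sum) (rule lin_facts(5))
      then show ?thesis by simp
    qed
    have "integral\<^sup>L (gauss n) (Qf n c) \<le> integral\<^sup>L (gauss n) (\<lambda>g. ((\<Sum>j<n. (lin n (c j) g)\<^sup>2) / L + L) / 2)"
      by (rule integral_mono[OF Qf_int int2 pt])
    also have "\<dots> = ((\<Sum>j<n. \<Sum>i<n. (c j i)\<^sup>2) / L + L) / 2"
    proof -
      interpret P: prob_space "gauss n" by (rule prob_gauss)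
      have "integral\<^sup>L (gauss n) (\<lambda>g. \<Sum>j<n. (lin n (c j) g)\<^sup>2) = (\<Sum>j<n. \<Sum>i<n. (c j i)\<^sup>2)"
        by (subst Bochner_Integration.integral_sum) (auto simp: lin_facts(5,6))
      then show ?thesis using lin_facts(5) by (simp add: P.prob_space)
    qed
    also have "\<dots> = L"
      using Lp unfolding L_def by (simp add: field_simps sum_nonneg power2_eq_square[symmetric])
    finally show ?thesis unfolding L_def .
  qed
qed

lemma Qf_lower:
  shows "sqrt (2/pi) * sqrt (\<Sum>j<n. \<Sum>i<n. (c j i)\<^sup>2) \<le> integral\<^sup>L (gauss n) (Qf n c)"
proof -
  define L where "L = sqrt (\<Sum>j<n. \<Sum>i<n. (c j i)\<^sup>2)"
  have L0: "0 \<le> L" unfolding L_def by (simp add: sum_nonneg)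
  show ?thesis
  proof (cases "L = 0")
    case True
    have "0 \<le> integral\<^sup>L (gauss n) (Qf n c)"
      by (rule integral_nonneg_AE) (simp add: Qf_def sum_nonneg)
    then show ?thesis using True unfolding L_def by simp
  next
    case False
    then have Lp: "L > 0" using L0 by simp
    define \<rho> where "\<rho> j = sqrt (\<Sum>i<n. (c j i)\<^sup>2)" for j
    have \<rho>0: "0 \<le> \<rho> j" for j unfolding \<rho>_def by (simp add: sum_nonneg)
    have \<rho>sq: "(\<rho> j)\<^sup>2 = (\<Sum>i<n. (c j i)\<^sup>2)" for j unfolding \<rho>_def by (simp add: sum_nonneg)
    have Lsq: "L\<^sup>2 = (\<Sum>j<n. (\<rho> j)\<^sup>2)" unfolding L_def \<rho>sq by (simp add: sum_nonneg)
    have L2w: "L2_set (\<lambda>j. \<rho> j / L) {..<n} = 1"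
    proof -
      have "(\<Sum>j<n. (\<rho> j / L)\<^sup>2) = (\<Sum>j<n. (\<rho> j)\<^sup>2) / L\<^sup>2"
        by (simp add: power_divide sum_divide_distrib)
      also have "\<dots> = 1" using Lp Lsq[symmetric] by simp
      finally show ?thesis unfolding L2_set_def by simp
    qed
    have pt: "(\<Sum>j<n. (\<rho> j / L) * \<bar>lin n (c j) g\<bar>) \<le> Qf n c g" for g
    proof -
      have "(\<Sum>j<n. (\<rho> j / L) * \<bar>lin n (c j) g\<bar>) = (\<Sum>j<n. \<bar>\<rho> j / L\<bar> * \<bar>lin n (c j) g\<bar>)"
        using \<rho>0 Lp by simp
      also have "\<dots> \<le> L2_set (\<lambda>j. \<rho> j / L) {..<n} * L2_set (\<lambda>j. lin n (c j) g) {..<n}"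
        by (rule L2_set_mult_ineq)
      also have "\<dots> = Qf n c g" using L2w unfolding Qf_def L2_set_def by simp
      finally show ?thesis .
    qed
    have int1: "integrable (gauss n) (\<lambda>g. \<Sum>j<n. (\<rho> j / L) * \<bar>lin n (c j) g\<bar>)"
      by (rule Bochner_Integration.integrable_sum) (simp add: lin_facts(3))
    have "integral\<^sup>L (gauss n) (\<lambda>g. \<Sum>j<n. (\<rho> j / L) * \<bar>lin n (c j) g\<bar>) = (\<Sum>j<n. (\<rho> j / L) * (sqrt (2/pi) * \<rho> j))"
      by (subst Bochner_Integration.integral_sum) (auto simp: lin_facts(3,4) \<rho>_def)
    also have "\<dots> = sqrt (2/pi) * ((\<Sum>j<n. (\<rho> j)\<^sup>2) / L)"
      by (simp add: sum_distrib_left sum_divide_distrib power2_eq_square mult_ac)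
    also have "\<dots> = sqrt (2/pi) * L" unfolding Lsq[symmetric] using Lp by (simp add: power2_eq_square)
    finally have "sqrt (2/pi) * L \<le> integral\<^sup>L (gauss n) (Qf n c)"
      using integral_mono[OF int1 Qf_int pt] by simp
    then show ?thesis unfolding L_def .
  qed
qed



lemma form3_add:
  "form3 a n m g (\<lambda>j. x j + y j) (\<lambda>k. t k + s k) =
   form3 a n m g x t + form3 a n m g y t + form3 a n m g x s + form3 a n m g y s"
  unfolding form3_def by (simp add: algebra_simps sum.distrib)

lemma form3_diff:
  "form3 a n m g y (\<lambda>k. t k - t' k) = form3 a n m g y t - form3 a n m g y t'"
  unfolding form3_def by (simp add: algebra_simps sum_subtractf)

lemma form3_ball:
  assumes "(\<Sum>j<n. (x j)\<^sup>2) \<le> 1"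
  shows "form3 a n m g x s \<le> Qf n (\<lambda>j i. \<Sum>k<m. a i j k * s k) g"
proof -
  have "form3 a n m g x s = (\<Sum>j<n. x j * lin n (\<lambda>i. \<Sum>k<m. a i j k * s k) g)"
    unfolding form3_def lin_def
    by (subst sum.swap) (simp add: sum_distrib_left sum_distrib_right mult_ac)
  also have "\<dots> \<le> (\<Sum>j<n. \<bar>x j\<bar> * \<bar>lin n (\<lambda>i. \<Sum>k<m. a i j k * s k) g\<bar>)"
    by (intro sum_mono) (simp add: abs_mult[symmetric])
  also have "\<dots> \<le> L2_set x {..<n} * L2_set (\<lambda>j. lin n (\<lambda>i. \<Sum>k<m. a i j k * s k) g) {..<n}"
    by (rule L2_set_mult_ineq)
  also have "\<dots> \<le> 1 * Qf n (\<lambda>j i. \<Sum>k<m. a i j k * s k) g"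
    unfolding Qf_def L2_set_def using assms
    by (intro mult_right_mono) (auto simp: sum_nonneg)
  finally show ?thesis by simp
qed

lemma alpha_Qf: "alphaA a n m (tensor g s) = Qf n (\<lambda>i j. \<Sum>k<m. a i j k * s k) g"
  unfolding alphaA_def Qf_def lin_def tensor_def
  by (simp add: sum_distrib_left mult_ac)

lemma pi_fact: "1 \<le> 2 * sqrt (2 / pi)"
proof -
  have "(1/2)\<^sup>2 \<le> 2 / pi" using pi_less_4 pi_gt3 by (simp add: field_simps power2_eq_square)
  then have "1/2 \<le> sqrt (2/pi)" by (rule real_le_rsqrt)
  then show ?thesis by simp
qed



theorem lemma5p11:
  shows "\<exists>C::real. \<forall>(n::nat) (m::nat) (a::nat \<Rightarrow> nat \<Rightarrow> nat \<Rightarrow> real) T V y s.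
     T \<subseteq> vecs m \<and> T \<noteq> {} \<and> bounded_in m T \<and>
     V \<noteq> {} \<and> V \<subseteq> ball2 n \<times> diffset T \<and> y \<in> vecs n \<and> s \<in> vecs m \<longrightarrow>
     FA a n m (translate V y s) \<le>
       FA a n m V + 2 * betaA a n m T y + C * (\<integral>g. alphaA a n m (tensor g s) \<partial>gauss n)"
proof (intro exI[of _ 2] allI impI, elim conjE)
  fix n m :: nat and a :: "nat \<Rightarrow> nat \<Rightarrow> nat \<Rightarrow> real" and T V y s
  assume TV: "T \<subseteq> vecs m" and Tne: "T \<noteq> {}" and Tb: "bounded_in m T" and Vne: "V \<noteq> {}"
    and VS: "V \<subseteq> ball2 n \<times> diffset T" and yv: "y \<in> vecs n" and sv: "s \<in> vecs m"
  interpret P: prob_space "gauss n" by (rule prob_gauss)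
  obtain R where R: "\<And>t k. t \<in> T \<Longrightarrow> k < m \<Longrightarrow> \<bar>t k\<bar> \<le> R"
    using Tb unfolding bounded_in_def by blast
  define R' where "R' = \<bar>R\<bar>"
  define Sy where "Sy = (\<Sum>j<n. \<bar>y j\<bar>)"
  define Ss where "Ss = (\<Sum>k<m. \<bar>s k\<bar>)"
  define Aa where "Aa = (\<Sum>i<n. \<Sum>j<n. \<Sum>k<m. \<bar>a i j k\<bar>)"
  have R'0: "0 \<le> R'" and Sy0: "0 \<le> Sy" and Ss0: "0 \<le> Ss"
    unfolding R'_def Sy_def Ss_def by (auto simp: sum_nonneg)
  have Tb': "\<And>t k. t \<in> T \<Longrightarrow> k < m \<Longrightarrow> \<bar>t k\<bar> \<le> R'"
    using R unfolding R'_def by force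
  have yb: "\<And>j. j < n \<Longrightarrow> \<bar>y j\<bar> \<le> Sy"
    unfolding Sy_def by (rule member_le_sum) auto
  have sb: "\<And>k. k < m \<Longrightarrow> \<bar>s k\<bar> \<le> Ss"
    unfolding Ss_def by (rule member_le_sum) auto
  have Vball: "\<And>w. w \<in> V \<Longrightarrow> (\<Sum>j<n. (fst w j)\<^sup>2) \<le> 1"
    using VS unfolding ball2_def by auto
  have Vx: "\<And>w j. w \<in> V \<Longrightarrow> j < n \<Longrightarrow> \<bar>fst w j\<bar> \<le> 1"
  proof -
    fix w j assume w: "w \<in> V" and j: "j < n"
    have "(fst w j)\<^sup>2 \<le> (\<Sum>j<n. (fst w j)\<^sup>2)"
      using j by (intro member_le_sum) auto
    then have "(fst w j)\<^sup>2 \<le> 1" using Vball[OF w] by simp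
    then show "\<bar>fst w j\<bar> \<le> 1" by (simp add: abs_square_le_1)
  qed
  have Vt: "\<And>w. w \<in> V \<Longrightarrow> \<exists>t1 t2. t1 \<in> T \<and> t2 \<in> T \<and> snd w = (\<lambda>k. t1 k - t2 k)"
  proof -
    fix w assume "w \<in> V"
    then have "snd w \<in> diffset T" using VS by (auto simp: mem_Times_iff)
    then show "\<exists>t1 t2. t1 \<in> T \<and> t2 \<in> T \<and> snd w = (\<lambda>k. t1 k - t2 k)"
      unfolding diffset_def by blast
  qed
  have Vtb: "\<And>w k. w \<in> V \<Longrightarrow> k < m \<Longrightarrow> \<bar>snd w k\<bar> \<le> 2 * R'"
  proof -
    fix w k assume w: "w \<in> V" and k: "k < m"
    obtain t1 t2 where t: "t1 \<in> T" "t2 \<in> T" "snd w = (\<lambda>k. t1 k - t2 k)" using Vt[OF w] by blast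
    show "\<bar>snd w k\<bar> \<le> 2 * R'" using Tb'[OF t(1) k] Tb'[OF t(2) k] t(3) by simp
  qed

  define \<phi>1 where "\<phi>1 w g = form3 a n m g (\<lambda>j. fst w j + y j) (\<lambda>k. snd w k + s k)" for w g
  define \<phi>0 where "\<phi>0 w g = form3 a n m g (fst w) (snd w)" for w g
  define \<psi> where "\<psi> t g = \<bar>form3 a n m g y t\<bar>" for t g
  define cP where "cP = (\<lambda>j i. \<Sum>k<m. a i j k * s k)"
  define cA where "cA = (\<lambda>i j. \<Sum>k<m. a i j k * s k)"

  have b1: "\<bar>\<phi>1 w g\<bar> \<le> (Aa * (1 + Sy) * (2 * R' + Ss)) * S1 n g" if "w \<in> V" for w g
    unfolding \<phi>1_def Aa_def
  proof (rule form3_bound)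
    show "\<bar>fst w j + y j\<bar> \<le> 1 + Sy" if "j < n" for j
      using Vx[OF \<open>w \<in> V\<close> that] yb[OF that] by linarith
    show "\<bar>snd w k + s k\<bar> \<le> 2 * R' + Ss" if "k < m" for k
      using Vtb[OF \<open>w \<in> V\<close> that] sb[OF that] by linarith
  qed (use Sy0 R'0 Ss0 in auto)
  have b0: "\<bar>\<phi>0 w g\<bar> \<le> (Aa * 1 * (2 * R')) * S1 n g" if "w \<in> V" for w g
    unfolding \<phi>0_def Aa_def
    by (rule form3_bound) (use Vx[OF that] Vtb[OF that] R'0 in auto)
  have bp: "\<bar>\<psi> t g\<bar> \<le> (Aa * Sy * R') * S1 n g" if "t \<in> T" for t g
    unfolding \<psi>_def Aa_def using form3_bound[of Sy R' n y m t a g] that yb Tb' Sy0 R'0 by auto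

  have c1: "continuous_on UNIV (\<phi>1 w)" for w unfolding \<phi>1_def by (rule form3_cont)
  have c0: "continuous_on UNIV (\<phi>0 w)" for w unfolding \<phi>0_def by (rule form3_cont)
  have cp: "continuous_on UNIV (\<psi> t)" for t unfolding \<psi>_def by (rule form3_abs_cont)

  note I1 = sup_int[OF Vne c1 b1]
  note I0 = sup_int[OF Vne c0 b0]
  note Ip = sup_int[OF Tne cp bp]

  have LHS: "FA a n m (translate V y s) = integral\<^sup>L (gauss n) (\<lambda>g. SUP w\<in>V. \<phi>1 w g)"
    unfolding FA_def translate_def \<phi>1_def by (simp add: image_image case_prod_beta)
  have FV: "FA a n m V = integral\<^sup>L (gauss n) (\<lambda>g. SUP w\<in>V. \<phi>0 w g)"
    unfolding FA_def \<phi>0_def by simp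
  have BT: "betaA a n m T y = integral\<^sup>L (gauss n) (\<lambda>g. SUP t\<in>T. \<psi> t g)"
    unfolding betaA_def \<psi>_def by simp
  have AL: "(\<integral>g. alphaA a n m (tensor g s) \<partial>gauss n) = integral\<^sup>L (gauss n) (Qf n cA)"
    unfolding alpha_Qf cA_def by simp

  have pt: "(SUP w\<in>V. \<phi>1 w g) \<le> (SUP w\<in>V. \<phi>0 w g) + 2 * (SUP t\<in>T. \<psi> t g) + Qf n cP g + form3 a n m g y s" for g
  proof (rule cSUP_least[OF Vne])
    fix w assume w: "w \<in> V"
    obtain t1 t2 where t: "t1 \<in> T" "t2 \<in> T" "snd w = (\<lambda>k. t1 k - t2 k)" using Vt[OF w] by blast
    have e: "\<phi>1 w g = \<phi>0 w g + form3 a n m g y (snd w) + form3 a n m g (fst w) s + form3 a n m g y s"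
      unfolding \<phi>1_def \<phi>0_def by (rule form3_add)
    have 1: "\<phi>0 w g \<le> (SUP w\<in>V. \<phi>0 w g)" by (rule cSUP_upper[OF w I0(2)])
    have 2: "form3 a n m g y (snd w) \<le> 2 * (SUP t\<in>T. \<psi> t g)"
    proof -
      have "form3 a n m g y (snd w) = form3 a n m g y t1 - form3 a n m g y t2"
        unfolding t(3) by (rule form3_diff)
      also have "\<dots> \<le> \<psi> t1 g + \<psi> t2 g" unfolding \<psi>_def by linarith
      also have "\<dots> \<le> (SUP t\<in>T. \<psi> t g) + (SUP t\<in>T. \<psi> t g)"
        by (intro add_mono cSUP_upper[OF _ Ip(2)] t)
      finally show ?thesis by simp
    qed
    have 3: "form3 a n m g (fst w) s \<le> Qf n cP g"
      unfolding cP_def by (rule form3_ball[OF Vball[OF w]])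
    show "\<phi>1 w g \<le> (SUP w\<in>V. \<phi>0 w g) + 2 * (SUP t\<in>T. \<psi> t g) + Qf n cP g + form3 a n m g y s"
      unfolding e using 1 2 3 by linarith
  qed
  have intL: "integrable (gauss n) (\<lambda>g. form3 a n m g y s)"
    unfolding form3_lin by (rule lin_facts(1))
  have intL0: "integral\<^sup>L (gauss n) (\<lambda>g. form3 a n m g y s) = 0"
    unfolding form3_lin by (rule lin_facts(2))
  have "integral\<^sup>L (gauss n) (\<lambda>g. SUP w\<in>V. \<phi>1 w g) \<le>
        integral\<^sup>L (gauss n) (\<lambda>g. (SUP w\<in>V. \<phi>0 w g) + 2 * (SUP t\<in>T. \<psi> t g) + Qf n cP g + form3 a n m g y s)"
  proof (rule integral_mono[OF _ _ pt])
    show "integrable (gauss n) (\<lambda>g. SUP w\<in>V. \<phi>1 w g)" using I1(1) by simp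
    have "integrable (gauss n) (\<lambda>g. 2 * (SUP t\<in>T. \<psi> t g))" using Ip(1) by simp
    then show "integrable (gauss n) (\<lambda>g. (SUP w\<in>V. \<phi>0 w g) + 2 * (SUP t\<in>T. \<psi> t g) + Qf n cP g + form3 a n m g y s)"
      using I0(1) Qf_int[of n cP] intL by (intro Bochner_Integration.integrable_add) auto
  qed
  also have "\<dots> = integral\<^sup>L (gauss n) (\<lambda>g. SUP w\<in>V. \<phi>0 w g) + 2 * integral\<^sup>L (gauss n) (\<lambda>g. SUP t\<in>T. \<psi> t g)
      + integral\<^sup>L (gauss n) (Qf n cP)"
    using I0(1) Ip(1) Qf_int[of n cP] intL intL0 by simp
  also have "integral\<^sup>L (gauss n) (Qf n cP) \<le> 2 * integral\<^sup>L (gauss n) (Qf n cA)"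
  proof -
    have sw: "(\<Sum>j<n. \<Sum>i<n. (cP j i)\<^sup>2) = (\<Sum>j<n. \<Sum>i<n. (cA j i)\<^sup>2)"
      unfolding cP_def cA_def by (rule sum.swap)
    have "integral\<^sup>L (gauss n) (Qf n cP) \<le> sqrt (\<Sum>j<n. \<Sum>i<n. (cA j i)\<^sup>2)"
      using Qf_upper[where n=n and c=cP] unfolding sw .
    also have "\<dots> \<le> 2 * sqrt (2/pi) * sqrt (\<Sum>j<n. \<Sum>i<n. (cA j i)\<^sup>2)"
      using mult_right_mono[OF pi_fact, of "sqrt (\<Sum>j<n. \<Sum>i<n. (cA j i)\<^sup>2)"] by (simp add: sum_nonneg)
    also have "\<dots> \<le> 2 * integral\<^sup>L (gauss n) (Qf n cA)"
      using Qf_lower[where n=n and c=cA] by simp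
    finally show ?thesis .
  qed
  finally show "FA a n m (translate V y s) \<le>
       FA a n m V + 2 * betaA a n m T y + 2 * (\<integral>g. alphaA a n m (tensor g s) \<partial>gauss n)"
    unfolding LHS FV BT AL by simp
qed


end
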